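(* Suppose given a pullback square of topological spaces with $C=A\times_BD$, maps $C\to A$, $r\colon C\to D$, $l\colon A\to B$ and $b\colon D\to B$, in which $r$ and $b$ are Serre fibrations and $b$ is surjective. Then $l$ is a Serre fibration. *)

theory Defs
  imports "HOL-Analysis.Analysis"
begin

definition cube :: "nat \<Rightarrow> (nat \<Rightarrow> real) topology" where
  "cube n = product_topology (\<lambda>i. top_of_set {0..1::real}) {..<n}"

definition serre_fibration :: "'e topology \<Rightarrow> 'b topology \<Rightarrow> ('e \<Rightarrow> 'b) \<Rightarrow> bool" where
  "serre_fibration E B p \<longleftrightarrow>
     continuous_map E B p \<and>
     (\<forall>n f H. continuous_map (cube n) E f \<and>
        continuous_map (prod_topology (cube n) (top_of_set {0..1::real})) B H \<and>
        (\<forall>x\<in>topspace (cube n). H (x, 0) = p (f x)) \<longrightarrow>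
        (\<exists>H'. continuous_map (prod_topology (cube n) (top_of_set {0..1::real})) E H' \<and>
           (\<forall>x\<in>topspace (cube n). H' (x, 0) = f x) \<and>
           (\<forall>z\<in>topspace (prod_topology (cube n) (top_of_set {0..1::real})). p (H' z) = H z)))"

definition fibre_product :: "'a topology \<Rightarrow> 'd topology \<Rightarrow> ('a \<Rightarrow> 'b) \<Rightarrow> ('d \<Rightarrow> 'b) \<Rightarrow> ('a \<times> 'd) topology" where
  "fibre_product A D l b =
     subtopology (prod_topology A D) {(x, y). x \<in> topspace A \<and> y \<in> topspace D \<and> l x = b y}"

end

theory Submission
  imports Defs
begin

lemma contract_cont:
  "continuous_map (prod_topology (cube n) (top_of_set {0..1::real})) (cube n)
     (\<lambda>(x,t). (\<lambda>i. if i < n then t * x i else undefined))"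
  unfolding cube_def
proof (subst continuous_map_componentwise, intro conjI ballI)
  show "(\<lambda>(x,t). (\<lambda>i. if i < n then t * x i else undefined)) `
     topspace (prod_topology (product_topology (\<lambda>i. top_of_set {0..1::real}) {..<n}) (top_of_set {0..1::real}))
     \<subseteq> extensional {..<n}"
    unfolding extensional_def by force
next
  fix k assume k: "k \<in> {..<n}"
  let ?X = "prod_topology (product_topology (\<lambda>i. top_of_set {0..1::real}) {..<n}) (top_of_set {0..1::real})"
  have c1: "continuous_map ?X euclideanreal (\<lambda>z. fst z k)"
  proof -
    have "continuous_map ?X (top_of_set {0..1::real}) ((\<lambda>x. x k) \<circ> fst)"
      by (rule continuous_map_compose[OF continuous_map_fst continuous_map_product_projection[OF k]])
    then show ?thesis
      using continuous_map_from_subtopology continuous_map_into_fulltopology by (fastforce simp: o_def)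
  qed
  have c2: "continuous_map ?X euclideanreal snd"
    using continuous_map_snd continuous_map_into_fulltopology by blast
  have "continuous_map ?X euclideanreal (\<lambda>z. snd z * fst z k)"
    using continuous_map_real_mult[OF c2 c1] .
  moreover have "\<forall>z\<in>topspace ?X. snd z * fst z k \<in> {0..1}"
  proof
    fix z assume "z \<in> topspace ?X"
    then have "fst z \<in> PiE {..<n} (\<lambda>i. {0..1::real})" "snd z \<in> {0..1::real}"
      unfolding topspace_prod_topology mem_Times_iff by simp_all
    then have "fst z k \<in> {0..1}" "snd z \<in> {0..1::real}" using k PiE_mem by blast+
    then show "snd z * fst z k \<in> {0..1}" by (simp add: mult_le_one)
  qed
  ultimately have "continuous_map ?X (top_of_set {0..1}) (\<lambda>z. snd z * fst z k)"
    unfolding continuous_map_in_subtopology Pi_iff by blast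
  then show "continuous_map ?X (top_of_set {0..1})
     (\<lambda>z. ((\<lambda>(x,t). (\<lambda>i. if i < n then t * x i else undefined)) z) k)"
    using k by (simp add: case_prod_beta)
qed


lemma serre_lift:
  assumes "serre_fibration E B p" "continuous_map (cube n) E f"
    "continuous_map (prod_topology (cube n) (top_of_set {0..1::real})) B H"
    "\<forall>x\<in>topspace (cube n). H (x, 0) = p (f x)"
  shows "\<exists>H'. continuous_map (prod_topology (cube n) (top_of_set {0..1::real})) E H' \<and>
           (\<forall>x\<in>topspace (cube n). H' (x, 0) = f x) \<and>
           (\<forall>z\<in>topspace (prod_topology (cube n) (top_of_set {0..1::real})). p (H' z) = H z)"
proof -
  have "\<forall>n f H. continuous_map (cube n) E f \<and>
        continuous_map (prod_topology (cube n) (top_of_set {0..1::real})) B H \<and>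
        (\<forall>x\<in>topspace (cube n). H (x, 0) = p (f x)) \<longrightarrow>
        (\<exists>H'. continuous_map (prod_topology (cube n) (top_of_set {0..1::real})) E H' \<and>
           (\<forall>x\<in>topspace (cube n). H' (x, 0) = f x) \<and>
           (\<forall>z\<in>topspace (prod_topology (cube n) (top_of_set {0..1::real})). p (H' z) = H z))"
    using assms(1) unfolding serre_fibration_def by (rule conjunct2)
  then have "continuous_map (cube n) E f \<and>
        continuous_map (prod_topology (cube n) (top_of_set {0..1::real})) B H \<and>
        (\<forall>x\<in>topspace (cube n). H (x, 0) = p (f x)) \<longrightarrow>
        (\<exists>H'. continuous_map (prod_topology (cube n) (top_of_set {0..1::real})) E H' \<and>
           (\<forall>x\<in>topspace (cube n). H' (x, 0) = f x) \<and>
           (\<forall>z\<in>topspace (prod_topology (cube n) (top_of_set {0..1::real})). p (H' z) = H z))"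
    by (elim allE)
  then show ?thesis using assms(2-4) by (elim impE) (intro conjI)
qed

lemma cube_lift:
  assumes sb: "serre_fibration D B b" and surj: "b ` topspace D = topspace B"
    and g: "continuous_map (cube n) B g"
  shows "\<exists>g'. continuous_map (cube n) D g' \<and> (\<forall>x\<in>topspace (cube n). b (g' x) = g x)"
proof -
  define z where "z = (\<lambda>i::nat. if i < n then (0::real) else undefined)"
  have z: "z \<in> topspace (cube n)" unfolding cube_def topspace_product_topology z_def
    by (simp add: PiE_iff extensional_def)
  then have "g z \<in> topspace B" using g by (simp add: continuous_map_def Pi_iff)
  then have "g z \<in> b ` topspace D" using surj by simp
  then obtain d where d0: "g z = b d" and d1: "d \<in> topspace D" by (rule imageE)
  have d: "d \<in> topspace D" "b d = g z" using d0 d1 by simp_all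
  define s where "s = (\<lambda>(x,t). (\<lambda>i::nat. if i < n then (t::real) * x i else undefined))"
  define H where "H = g \<circ> s"
  have Hc: "continuous_map (prod_topology (cube n) (top_of_set {0..1::real})) B H"
    unfolding H_def s_def using continuous_map_compose[OF contract_cont g] .
  have H0: "\<forall>x\<in>topspace (cube n). H (x, 0) = b ((\<lambda>_. d) x)"
    using d by (simp add: H_def s_def z_def o_def cong: if_cong)
  have fc: "continuous_map (cube n) D (\<lambda>_. d)" using d by simp
  from serre_lift[OF sb fc Hc H0] obtain H' where
    H': "continuous_map (prod_topology (cube n) (top_of_set {0..1::real})) D H'"
        "\<forall>z\<in>topspace (prod_topology (cube n) (top_of_set {0..1::real})). b (H' z) = H z"
    by blast
  define g' where "g' = (\<lambda>x. H' (x, 1::real))"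
  have "continuous_map (cube n) D g'"
  proof -
    have "continuous_map (cube n) (prod_topology (cube n) (top_of_set {0..1::real})) (\<lambda>x. (x, 1::real))"
      by (simp add: continuous_map_paired)
    from continuous_map_compose[OF this H'(1)] show ?thesis by (simp add: o_def g'_def)
  qed
  moreover have "\<forall>x\<in>topspace (cube n). b (g' x) = g x"
  proof
    fix x assume x: "x \<in> topspace (cube n)"
    have xin: "x \<in> PiE {..<n} (\<lambda>i. {0..1::real})" using x by (simp add: cube_def)
    have "s (x,1) = x" unfolding s_def by (rule ext) (simp add: PiE_arb[OF xin])
    have "(x, 1::real) \<in> topspace (prod_topology (cube n) (top_of_set {0..1::real}))"
      using x by (simp add: topspace_prod_topology)
    then have "b (H' (x,1)) = H (x,1)" using H'(2) by blast
    then show "b (g' x) = g x" using \<open>s (x,1) = x\<close> by (simp add: g'_def H_def)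
  qed
  ultimately show ?thesis by blast
qed

theorem lemma4p18:
  fixes A :: "'a topology" and B :: "'b topology" and D :: "'d topology"
    and l :: "'a \<Rightarrow> 'b" and b :: "'d \<Rightarrow> 'b"
  assumes "continuous_map A B l"
    and "continuous_map D B b"
    and "serre_fibration (fibre_product A D l b) D snd"
    and "serre_fibration D B b"
    and "b ` topspace D = topspace B"
  shows "serre_fibration A B l"
  unfolding serre_fibration_def
proof (intro conjI allI impI)
  show "continuous_map A B l" by fact
  fix n f H
  assume a: "continuous_map (cube n) A f \<and>
        continuous_map (prod_topology (cube n) (top_of_set {0..1::real})) B H \<and>
        (\<forall>x\<in>topspace (cube n). H (x, 0) = l (f x))"
  let ?P = "prod_topology (cube n) (top_of_set {0..1::real})"
  have lf: "continuous_map (cube n) B (l \<circ> f)"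
    using a assms(1) continuous_map_compose by blast
  obtain g where g: "continuous_map (cube n) D g" "\<forall>x\<in>topspace (cube n). b (g x) = l (f x)"
    using cube_lift[OF assms(4,5) lf] by auto
  have Hc: "continuous_map ?P B H" using a by blast
  have H0: "\<forall>x\<in>topspace (cube n). H (x, 0) = b (g x)" using a g(2) by simp
  from serre_lift[OF assms(4) g(1) Hc H0] obtain G where
    G: "continuous_map ?P D G" "\<forall>x\<in>topspace (cube n). G (x, 0) = g x"
       "\<forall>z\<in>topspace ?P. b (G z) = H z"
    by blast
  have fg: "continuous_map (cube n) (fibre_product A D l b) (\<lambda>x. (f x, g x))"
    unfolding fibre_product_def continuous_map_in_subtopology
  proof
    show "continuous_map (cube n) (prod_topology A D) (\<lambda>x. (f x, g x))"
      using a g by (simp add: continuous_map_paired)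
    show "(\<lambda>x. (f x, g x)) \<in> topspace (cube n) \<rightarrow> {(x, y). x \<in> topspace A \<and> y \<in> topspace D \<and> l x = b y}"
    proof
      fix x assume x: "x \<in> topspace (cube n)"
      have "f x \<in> topspace A" using a x continuous_map_funspace by blast
      moreover have "g x \<in> topspace D" using g x continuous_map_funspace by blast
      ultimately show "(f x, g x) \<in> {(x, y). x \<in> topspace A \<and> y \<in> topspace D \<and> l x = b y}"
        using g(2) x by simp
    qed
  qed
  have G0: "\<forall>x\<in>topspace (cube n). G (x, 0) = snd (f x, g x)" using G(2) by simp
  from serre_lift[OF assms(3) fg G(1) G0] obtain K where
    K: "continuous_map ?P (fibre_product A D l b) K" "\<forall>x\<in>topspace (cube n). K (x, 0) = (f x, g x)"
       "\<forall>z\<in>topspace ?P. snd (K z) = G z"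
    by blast
  have fstc: "continuous_map (fibre_product A D l b) A fst"
    unfolding fibre_product_def
    by (rule continuous_map_from_subtopology[OF continuous_map_fst])
  show "\<exists>H'. continuous_map ?P A H' \<and> (\<forall>x\<in>topspace (cube n). H' (x, 0) = f x) \<and>
           (\<forall>z\<in>topspace ?P. l (H' z) = H z)"
  proof (intro exI conjI ballI)
    show "continuous_map ?P A (fst \<circ> K)" using continuous_map_compose[OF K(1) fstc] .
    fix x assume "x \<in> topspace (cube n)" then show "(fst \<circ> K) (x, 0) = f x" using K(2) by simp
  next
    fix z assume z: "z \<in> topspace ?P"
    have "K z \<in> topspace (fibre_product A D l b)"
      using K(1) z continuous_map_funspace by blast
    then have "K z \<in> {(x, y). x \<in> topspace A \<and> y \<in> topspace D \<and> l x = b y}"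
      unfolding fibre_product_def topspace_subtopology by (rule IntD2)
    then have "l (fst (K z)) = b (snd (K z))"
      by (simp add: case_prod_beta)
    moreover have "snd (K z) = G z" using K(3) z by blast
    moreover have "b (G z) = H z" using G(3) z by blast
    ultimately show "l ((fst \<circ> K) z) = H z" by simp
  qed
qed

end
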